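(* Let $\tilde{\mathbf Q}=\mathrm{diag}(\tilde{\mathbf q})$ with $|\tilde q_k|=1$ for all $k$, and let all quantities be as defined in the context. Then: (i) For every $\mathbf Q=\mathrm{diag}(\mathbf q)$ with $|q_k|=1$ for all $k$, $$g(\mathbf Q)\ \ge\ \tilde g(\mathbf Q,\tilde{\mathbf Q}):=-2n\lambda_1(\mathbf Z)+2\,\mathrm{Re}\{\mathbf q^H(\lambda_1(\mathbf Z)\mathbf I-\mathbf Z)\tilde{\mathbf q}\}+\tilde{\mathbf q}^H\mathbf Z\tilde{\mathbf q}+2\,\mathrm{Re}\{\mathbf q^H\mathbf a_4\}+C_1(\tilde{\mathbf Q})+C_2(\tilde{\mathbf Q}),$$ with equality when $\mathbf Q=\tilde{\mathbf Q}$. (ii) A maximizer of $\tilde g(\cdot,\tilde{\mathbf Q})$ over all unit-modulus diagonal $\mathbf Q$ is $$\mathbf Q=\mathrm{diag}\big(e^{\mathrm j\arg(v_1)},\dots,e^{\mathrm j\arg(v_n)}\big),\qquad \mathbf v=(\lambda_1(\mathbf Z)\mathbf I-\mathbf Z)\tilde{\mathbf q}+\mathbf a_4,$$ where $v_k$ denotes the $k$-th entry of $\mathbf v$ (if some $v_k=0$, the $k$-th phase is arbitrary).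
   Context: Let $m,d,n$ be positive integers and $\mathrm j$ the imaginary unit. Let $\mathbf H_{AI}\in\mathbb C^{n\times m}$ and $\mathbf H_{IB}\in\mathbb C^{d\times n}$, and let $R\in\mathbb C^{m\times m}$ be Hermitian positive semidefinite. Set $\mathbf L=\mathbf H_{AI}R\mathbf H_{AI}^H$ and let $\mathbf L^{1/2}$ be its positive semidefinite square root. Here $\ln$ denotes the natural logarithm. For a diagonal $\mathbf Q=\mathrm{diag}(\mathbf q)$, with $\mathbf q\in\mathbb C^n$ and $|q_k|=1$ for all $k$, define $$g(\mathbf Q)=\ln\det(\mathbf I_d+\mathbf H_{IB}\mathbf Q\mathbf L\mathbf Q^H\mathbf H_{IB}^H)\qquad\text{and}\qquad \mathbf P=\mathbf H_{IB}\mathbf Q\mathbf L^{1/2}.$$ Given the feasible point $\tilde{\mathbf Q}=\mathrm{diag}(\tilde{\mathbf q})$ with $|\tilde q_k|=1$, define: - $\tilde{\mathbf P}=\mathbf H_{IB}\tilde{\mathbf Q}\mathbf L^{1/2}$; - $\tilde{\mathbf Q}_B=\mathbf I-\tilde{\mathbf P}(\mathbf I+\tilde{\mathbf P}^H\tilde{\mathbf P})^{-1}\tilde{\mathbf P}^H$, which is positive definite; - $\mathbf J_B=\tilde{\mathbf P}(\mathbf I+\tilde{\mathbf P}^H\tilde{\mathbf P})^{-1}$; - $\mathbf A_1=\tilde{\mathbf Q}_B^{-1}\mathbf J_B\mathbf L^{1/2}$, $\mathbf A_2=\mathbf H_{IB}^H\mathbf H_{IB}$, $\mathbf A_3=\mathbf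 L^{1/2}\mathbf J_B^H$, $\mathbf A_4=\mathbf H_{IB}^H\tilde{\mathbf Q}_B^{-1}\mathbf J_B\mathbf L^{1/2}$; - $\mathbf Z=\mathbf A_2\odot(\mathbf A_3\mathbf A_1)^T$, where $\odot$ is the Hadamard (entrywise) product; $\mathbf Z$ is Hermitian and $\lambda_1(\mathbf Z)$ denotes its largest eigenvalue; - $\mathbf a_4\in\mathbb C^n$, the vector of diagonal entries of $\mathbf A_4$; - $C_1(\tilde{\mathbf Q})=-\ln\det\tilde{\mathbf Q}_B+d-\mathrm{tr}(\tilde{\mathbf Q}_B^{-1})$; - $C_2(\tilde{\mathbf Q})=d-\mathrm{tr}(\tilde{\mathbf Q}_B^{-1})+\mathrm{tr}(\tilde{\mathbf Q}_B^{-1}\mathbf J_B\tilde{\mathbf P}^H\tilde{\mathbf P}\mathbf J_B^H)$. *)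

theory Defs
  imports "HOL-Analysis.Analysis"
begin

text \<open>Complex matrices with finite index types: a value of type complex^'c^'r is an
  r x c matrix (rows indexed by 'r, columns by 'c).\<close>

definition ctrans :: "complex^'c^'r \<Rightarrow> complex^'r^'c" where
  "ctrans A = (\<chi> i j. cnj (A $ j $ i))"

definition diagm :: "complex^'n \<Rightarrow> complex^'n^'n" where
  "diagm q = (\<chi> i j. if i = j then q $ i else 0)"

definition diagv :: "complex^'n^'n \<Rightarrow> complex^'n" where
  "diagv A = (\<chi> i. A $ i $ i)"

definition hadamard :: "complex^'c^'r \<Rightarrow> complex^'c^'r \<Rightarrow> complex^'c^'r" where
  "hadamard A B = (\<chi> i j. A $ i $ j * B $ i $ j)"

definition cdot :: "complex^'n \<Rightarrow> complex^'n \<Rightarrow> complex" where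
  "cdot x y = (\<Sum>i\<in>UNIV. cnj (x $ i) * y $ i)"

definition hermitian :: "complex^'n^'n \<Rightarrow> bool" where
  "hermitian A \<longleftrightarrow> ctrans A = A"

definition psd :: "complex^'n^'n \<Rightarrow> bool" where
  "psd A \<longleftrightarrow> hermitian A \<and> (\<forall>x. 0 \<le> Re (cdot x (A *v x)))"

definition unimod :: "complex^'n \<Rightarrow> bool" where
  "unimod q \<longleftrightarrow> (\<forall>k. cmod (q $ k) = 1)"

definition lambda1 :: "complex^'n^'n \<Rightarrow> real" where
  "lambda1 Z = Max {x::real. \<exists>v. v \<noteq> 0 \<and> Z *v v = complex_of_real x *s v}"

end

theory Submission
  imports Defs
begin

lemma ctrans_nth[simp]: "ctrans A $ i $ j = cnj (A $ j $ i)"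
  by (simp add: ctrans_def)

lemma ctrans_ctrans[simp]: "ctrans (ctrans A) = A"
  by (simp add: vec_eq_iff)

lemma ctrans_mult: "ctrans (A ** B) = ctrans B ** ctrans A"
  by (simp add: vec_eq_iff matrix_matrix_mult_def mult.commute)

lemma ctrans_add: "ctrans (A + B) = ctrans A + ctrans B"
  by (simp add: vec_eq_iff)

lemma ctrans_diff: "ctrans (A - B) = ctrans A - ctrans B"
  by (simp add: vec_eq_iff)

lemma ctrans_mat: "ctrans (mat c :: complex^'n^'n) = mat (cnj c)"
  by (simp add: vec_eq_iff mat_def)

lemma ctrans_one[simp]: "ctrans (mat 1 :: complex^'n^'n) = mat 1"
  by (simp add: ctrans_mat)

lemma cdot_mat: "cdot x (A *v y) = cdot (ctrans A *v x) y"
proof -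
  have "cdot x (A *v y) = (\<Sum>i\<in>UNIV. \<Sum>j\<in>UNIV. cnj (x $ i) * (A $ i $ j * y $ j))"
    unfolding cdot_def matrix_vector_mult_def by (simp add: sum_distrib_left)
  also have "\<dots> = (\<Sum>j\<in>UNIV. \<Sum>i\<in>UNIV. cnj (x $ i) * (A $ i $ j * y $ j))"
    by (rule sum.swap)
  also have "\<dots> = cdot (ctrans A *v x) y"
    unfolding cdot_def matrix_vector_mult_def by (simp add: sum_distrib_left mult_ac)
  finally show ?thesis .
qed

lemma cdot_add_right: "cdot x (y + z) = cdot x y + cdot x z"
  by (simp add: cdot_def distrib_left sum.distrib)
lemma cdot_diff_right: "cdot x (y - z) = cdot x y - cdot x z"
  by (simp add: cdot_def right_diff_distrib sum_subtractf)
lemma cdot_add_left: "cdot (y + z) x = cdot y x + cdot z x"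
  by (simp add: cdot_def distrib_right sum.distrib)
lemma cdot_diff_left: "cdot (y - z) x = cdot y x - cdot z x"
  by (simp add: cdot_def left_diff_distrib sum_subtractf)
lemma cdot_scale_right: "cdot x (a *s y) = a * cdot x y"
  by (simp add: cdot_def sum_distrib_left mult_ac)
lemma cdot_scale_left: "cdot (a *s x) y = cnj a * cdot x y"
  by (simp add: cdot_def sum_distrib_left mult_ac)
lemma cdot_cnj: "cnj (cdot x y) = cdot y x"
  by (simp add: cdot_def mult.commute)
lemma cdot_zero_left[simp]: "cdot 0 x = 0" by (simp add: cdot_def)
lemma cdot_zero_right[simp]: "cdot x 0 = 0" by (simp add: cdot_def)

lemma cdot_self: "cdot x x = complex_of_real (\<Sum>i\<in>UNIV. (cmod (x $ i))\<^sup>2)"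
  unfolding cdot_def of_real_sum by (rule sum.cong) (simp_all add: complex_norm_square mult.commute flip: of_real_power)

lemma cdot_self_Re: "Re (cdot x x) = (\<Sum>i\<in>UNIV. (cmod (x $ i))\<^sup>2)"
  by (simp add: cdot_self)

lemma cdot_self_Im: "Im (cdot x x) = 0"
  by (simp add: cdot_self)

lemma cdot_self_nonneg: "0 \<le> Re (cdot x x)"
  by (simp add: cdot_self_Re sum_nonneg)

lemma cdot_self_eq0: "cdot x x = 0 \<longleftrightarrow> x = 0"
proof
  assume "cdot x x = 0"
  then have "(\<Sum>i\<in>UNIV. (cmod (x $ i))\<^sup>2) = 0" using cdot_self_Re[of x] by simp
  then have "\<forall>i\<in>UNIV. (cmod (x $ i))\<^sup>2 = 0" by (subst (asm) sum_nonneg_eq_0_iff) auto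
  then show "x = 0" by (simp add: vec_eq_iff)
qed simp

lemma cdot_self_pos: "x \<noteq> 0 \<Longrightarrow> 0 < Re (cdot x x)"
  using cdot_self_nonneg[of x] cdot_self_eq0[of x] cdot_self_Im[of x]
  by (metis complex_eq_iff order_le_less zero_complex.simps)

lemma cdot_norm: "Re (cdot x x) = (norm x)\<^sup>2"
  by (simp add: cdot_self_Re norm_vec_def L2_set_def sum_nonneg)

lemma hermitianD: "hermitian A \<Longrightarrow> ctrans A = A" by (simp add: hermitian_def)

lemma herm_cdot_real: "hermitian A \<Longrightarrow> Im (cdot x (A *v x)) = 0"
proof -
  assume h: "hermitian A"
  have "cnj (cdot x (A *v x)) = cdot x (A *v x)"
    by (metis cdot_cnj cdot_mat h hermitianD)
  then show ?thesis by (metis Reals_cnj_iff complex_is_Real_iff)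
qed

lemma herm_cdot_swap: "hermitian A \<Longrightarrow> cdot x (A *v y) = cdot (A *v x) y"
  by (metis cdot_mat hermitianD)

lemma trace_ctrans: "trace (ctrans A) = cnj (trace A)"
  by (simp add: trace_def)

lemma mat_vec_nth: "(A *v x) $ i = (\<Sum>j\<in>UNIV. A $ i $ j * x $ j)"
  by (simp add: matrix_vector_mult_def)

lemma mat_mul_nth: "(A ** B) $ i $ j = (\<Sum>k\<in>UNIV. A $ i $ k * B $ k $ j)"
  by (simp add: matrix_matrix_mult_def)

lemma scaleR_cvec: "t *\<^sub>R (x::complex^'n) = complex_of_real t *s x"
proof -
  have "(t *\<^sub>R x) $ i = (complex_of_real t *s x) $ i" for i
    using scaleR_conv_of_real[of t "x $ i"] by simp
  then show ?thesis by (simp add: vec_eq_iff)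
qed


lemma exists_orth:
  fixes f :: "nat \<Rightarrow> complex^'n"
  assumes "k < CARD('n)"
  shows "\<exists>x::complex^'n. x \<noteq> 0 \<and> (\<forall>i<k. cdot (f i) x = 0)"
proof -
  obtain h :: "'n \<Rightarrow> nat" where h: "bij_betw h UNIV {0..<CARD('n)}"
    using ex_bij_betw_finite_nat[of "UNIV::'n set"] by auto
  have himg: "h ` UNIV = {0..<CARD('n)}" using h unfolding bij_betw_def by blast
  have "k \<in> h ` UNIV" using himg assms by simp
  then obtain r where r: "h r = k" by blast
  define F :: "complex^'n^'n" where "F = (\<chi> r j. if h r < k then cnj (f (h r) $ j) else 0)"
  have "row r F = 0" unfolding row_def F_def using r by (simp add: vec_eq_iff)
  then have "det F = 0" by (rule det_zero_row(1))
  then have "\<not> invertible F" using invertible_det_nz[of F] by simp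
  then have "\<not> (\<exists>B. B ** F = mat 1)" using invertible_left_inverse[of F] by simp
  then have "\<not> (\<forall>x. F *v x = 0 \<longrightarrow> x = 0)"
    using matrix_left_invertible_ker[of F] by simp
  then obtain x where x: "x \<noteq> 0" "F *v x = 0" by blast
  have "cdot (f i) x = 0" if "i < k" for i
  proof -
    have "i \<in> h ` UNIV" using himg that assms by simp
    then obtain r' where r': "h r' = i" by blast
    have "(F *v x) $ r' = (\<Sum>j\<in>UNIV. F $ r' $ j * x $ j)" by (rule mat_vec_nth)
    also have "\<dots> = cdot (f i) x" unfolding cdot_def F_def using r' that by simp
    finally show ?thesis using x by simp
  qed
  then show ?thesis using x by blast
qed

definition Rq :: "complex^'n^'n \<Rightarrow> complex^'n \<Rightarrow> real" where
  "Rq S x = Re (cdot x (S *v x))"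

lemma Rq_scale: "Rq S (complex_of_real c *s x) = c\<^sup>2 * Rq S x"
  by (simp add: Rq_def cdot_scale_left cdot_scale_right vector_scalar_commute power2_eq_square)

lemma cdot_real_scale_self: "Re (cdot (complex_of_real c *s x) (complex_of_real c *s x)) = c\<^sup>2 * Re (cdot x x)"
  by (simp add: cdot_scale_left cdot_scale_right power2_eq_square)


lemma Re_ofreal_mult: "Re (complex_of_real t * z) = t * Re z" by simp

lemma cdot_expand4:
  "cdot (x + c *s y) (u + c *s w) = cdot x u + c * cdot x w + cnj c * cdot y u + cnj c * c * cdot y w"
  by (simp add: cdot_add_left cdot_add_right cdot_scale_left cdot_scale_right algebra_simps)

lemma Rq_expand:
  assumes "hermitian S"
  shows "Rq S (x + complex_of_real t *s y) = Rq S x + 2 * t * Re (cdot y (S *v x)) + t\<^sup>2 * Rq S y"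
proof -
  have "cdot x (S *v y) = cnj (cdot (S *v y) x)" by (simp add: cdot_cnj)
  also have "cdot (S *v y) x = cdot y (S *v x)" using herm_cdot_swap[OF assms, of y x] by simp
  finally have e: "Re (cdot x (S *v y)) = Re (cdot y (S *v x))" by simp
  have sv: "S *v (x + complex_of_real t *s y) = S *v x + complex_of_real t *s (S *v y)"
    by (simp add: matrix_vector_right_distrib vector_scalar_commute)
  have "Rq S (x + complex_of_real t *s y) = Re (cdot x (S *v x) + complex_of_real t * cdot x (S *v y)
     + complex_of_real t * cdot y (S *v x) + complex_of_real t * complex_of_real t * cdot y (S *v y))"
    unfolding Rq_def sv cdot_expand4 by simp
  also have "\<dots> = Re (cdot x (S *v x)) + t * Re (cdot x (S *v y)) + t * Re (cdot y (S *v x)) + (t * t) * Re (cdot y (S *v y))"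
    by (simp only: plus_complex.sel Re_ofreal_mult of_real_mult[symmetric])
  also have "\<dots> = Rq S x + 2 * t * Re (cdot y (S *v x)) + t\<^sup>2 * Rq S y"
    unfolding Rq_def e by (simp add: power2_eq_square)
  finally show ?thesis .
qed

lemma N_expand:
  "Re (cdot (x + complex_of_real t *s y) (x + complex_of_real t *s y)) = Re (cdot x x) + 2 * t * Re (cdot y x) + t\<^sup>2 * Re (cdot y y)"
proof -
  have "cdot x y = cnj (cdot y x)" by (simp add: cdot_cnj)
  then have e: "Re (cdot x y) = Re (cdot y x)" by simp
  have "Re (cdot (x + complex_of_real t *s y) (x + complex_of_real t *s y)) = Re (cdot x x + complex_of_real t * cdot x y
     + complex_of_real t * cdot y x + complex_of_real t * complex_of_real t * cdot y y)"
    unfolding cdot_expand4 by simp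
  also have "\<dots> = Re (cdot x x) + t * Re (cdot x y) + t * Re (cdot y x) + (t * t) * Re (cdot y y)"
    by (simp only: plus_complex.sel Re_ofreal_mult of_real_mult[symmetric])
  also have "\<dots> = Re (cdot x x) + 2 * t * Re (cdot y x) + t\<^sup>2 * Re (cdot y y)"
    unfolding e by (simp add: power2_eq_square)
  finally show ?thesis .
qed

lemma quad_nonpos_imp:
  fixes a b :: real
  assumes "\<forall>t. 2 * t * a + t\<^sup>2 * b \<le> 0"
  shows "a = 0"
proof -
  define c where "c = \<bar>b\<bar> + 1"
  have pos: "c > 0" by (simp add: c_def)
  define t where "t = a / c"
  have "2 * t * a + t\<^sup>2 * b \<le> 0" using assms by blast
  moreover have "2 * t * a + t\<^sup>2 * b = a\<^sup>2 * (2 * c + b) / c\<^sup>2"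
    using pos unfolding t_def power2_eq_square by (simp add: field_simps)
  ultimately have "a\<^sup>2 * (2 * c + b) / c\<^sup>2 \<le> 0" by simp
  moreover have "c\<^sup>2 > 0" using pos by simp
  ultimately have "a\<^sup>2 * (2 * c + b) \<le> 0"
    by (simp add: divide_le_0_iff)
  moreover have "2 * c + b > 0"
  proof -
    have "\<bar>b\<bar> + b \<ge> 0" by (cases "b \<ge> 0") auto
    then show ?thesis unfolding c_def by simp
  qed
  ultimately have "a\<^sup>2 \<le> 0"
    by (simp add: mult_le_0_iff)
  then show ?thesis by simp
qed

lemma cont_cdot: "continuous_on UNIV (\<lambda>x. cdot v (x::complex^'n))"
  unfolding cdot_def by (intro continuous_intros)

lemma cont_Rq: "continuous_on A (Rq S)"
proof -
  have "Rq S = (\<lambda>x. Re (\<Sum>i\<in>UNIV. cnj (x $ i) * (\<Sum>j\<in>UNIV. S $ i $ j * x $ j)))"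
    by (simp add: Rq_def cdot_def mat_vec_nth fun_eq_iff)
  then show ?thesis by (simp, intro continuous_intros)
qed

lemma cdot_self_norm_eq: "cdot x x = complex_of_real ((norm x)\<^sup>2)"
  using cdot_norm[of x] cdot_self_Im[of x] by (simp add: complex_eq_iff)

lemma Rq_zero[simp]: "Rq S 0 = 0" by (simp add: Rq_def)

lemma rayleigh_max:
  fixes S :: "complex^'n^'n" and f :: "nat \<Rightarrow> complex^'n" and lam :: "nat \<Rightarrow> real"
  assumes herm: "hermitian S" and ev: "\<forall>i<k. S *v f i = complex_of_real (lam i) *s f i"
    and k: "k < CARD('n)"
  shows "\<exists>x \<mu>. (\<forall>i<k. cdot (f i) x = 0) \<and> cdot x x = 1 \<and> S *v x = complex_of_real \<mu> *s x"
proof -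
  define V where "V = {x::complex^'n. \<forall>i<k. cdot (f i) x = 0}"
  have V_eq: "V = (\<Inter>i\<in>{..<k}. {x. cdot (f i) x = 0})" by (auto simp: V_def)
  have "closed V" unfolding V_eq
    by (intro closed_INT ballI closed_Collect_eq cont_cdot continuous_on_const)
  then have cC: "compact (V \<inter> sphere 0 1)"
    by (simp add: closed_Int_compact)
  have V_add: "x + y \<in> V" if "x \<in> V" "y \<in> V" for x y
    using that by (simp add: V_def cdot_add_right)
  have V_scale: "c *s x \<in> V" if "x \<in> V" for x c
    using that by (simp add: V_def cdot_scale_right)
  obtain x1 where x1: "x1 \<noteq> 0" "\<forall>i<k. cdot (f i) x1 = 0" using exists_orth[OF k] by blast
  have x1V: "x1 \<in> V" using x1 by (simp add: V_def)
  define z1 where "z1 = complex_of_real (1 / norm x1) *s x1"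
  have "z1 = (1 / norm x1) *\<^sub>R x1" by (simp add: z1_def scaleR_cvec)
  then have "norm z1 = 1" using x1 by simp
  moreover have "z1 \<in> V" unfolding z1_def by (rule V_scale[OF x1V])
  ultimately have ne: "V \<inter> sphere 0 1 \<noteq> {}" by auto
  obtain x0 where x0: "x0 \<in> V \<inter> sphere 0 1" and mx: "\<forall>y\<in>V \<inter> sphere 0 1. Rq S y \<le> Rq S x0"
    using continuous_attains_sup[OF cC ne cont_Rq] by blast
  define \<mu> where "\<mu> = Rq S x0"
  have x0V: "x0 \<in> V" and nx0: "norm x0 = 1" using x0 by auto
  have cx0: "cdot x0 x0 = 1" using nx0 by (simp add: cdot_self_norm_eq)
  have bound: "Rq S y \<le> \<mu> * Re (cdot y y)" if "y \<in> V" for y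
  proof (cases "y = 0")
    case True then show ?thesis by simp
  next
    case False
    define z where "z = complex_of_real (1 / norm y) *s y"
    have "z = (1 / norm y) *\<^sub>R y" by (simp add: z_def scaleR_cvec)
    then have "norm z = 1" using False by simp
    moreover have "z \<in> V" unfolding z_def by (rule V_scale[OF that])
    ultimately have "Rq S z \<le> \<mu>" using mx \<mu>_def by auto
    moreover have "Rq S z = (1 / norm y)\<^sup>2 * Rq S y" unfolding z_def by (rule Rq_scale)
    ultimately have "(1 / norm y)\<^sup>2 * Rq S y \<le> \<mu>" by simp
    moreover have "norm y > 0" using False by simp
    ultimately have "Rq S y \<le> \<mu> * (norm y)\<^sup>2"
      by (simp add: field_simps power2_eq_square)
    then show ?thesis by (simp add: cdot_norm)
  qed
  define w where "w = S *v x0 - complex_of_real \<mu> *s x0"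
  have wV: "w \<in> V"
  proof -
    have "cdot (f i) (S *v x0) = 0" if "i < k" for i
    proof -
      have "cdot (f i) (S *v x0) = cdot (S *v f i) x0" by (rule herm_cdot_swap[OF herm])
      also have "\<dots> = cnj (complex_of_real (lam i)) * cdot (f i) x0"
        using ev that by (simp add: cdot_scale_left)
      also have "\<dots> = 0" using x0V that by (simp add: V_def)
      finally show ?thesis .
    qed
    then have "S *v x0 \<in> V" by (simp add: V_def)
    moreover have "complex_of_real \<mu> *s x0 \<in> V" by (rule V_scale[OF x0V])
    ultimately show ?thesis unfolding w_def
      by (simp add: V_def cdot_diff_right)
  qed
  have key: "Re (cdot y w) = 0" if yV: "y \<in> V" for y
  proof -
    have "2 * t * (Re (cdot y (S *v x0)) - \<mu> * Re (cdot y x0)) + t\<^sup>2 * (Rq S y - \<mu> * Re (cdot y y)) \<le> 0" for t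
    proof -
      have "x0 + complex_of_real t *s y \<in> V" by (intro V_add V_scale x0V yV)
      then have "Rq S (x0 + complex_of_real t *s y) \<le> \<mu> * Re (cdot (x0 + complex_of_real t *s y) (x0 + complex_of_real t *s y))"
        by (rule bound)
      then have "Rq S x0 + 2 * t * Re (cdot y (S *v x0)) + t\<^sup>2 * Rq S y
          \<le> \<mu> * (Re (cdot x0 x0) + 2 * t * Re (cdot y x0) + t\<^sup>2 * Re (cdot y y))"
        unfolding Rq_expand[OF herm] N_expand .
      then show ?thesis using cx0 unfolding \<mu>_def by (simp add: algebra_simps)
    qed
    then have "Re (cdot y (S *v x0)) - \<mu> * Re (cdot y x0) = 0"
      by (intro quad_nonpos_imp) blast
    then show ?thesis unfolding w_def by (simp add: cdot_diff_right cdot_scale_right)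
  qed
  have "Re (cdot w w) = 0" using key[OF wV] .
  then have "w = 0" using cdot_self_pos[of w] by (cases "w = 0") auto
  then have "S *v x0 = complex_of_real \<mu> *s x0" by (simp add: w_def)
  then show ?thesis using x0V cx0 unfolding V_def by blast
qed

lemma mul_diagm_nth: "(A ** diagm v) $ i $ j = A $ i $ j * v $ j"
proof -
  have "(A ** diagm v) $ i $ j = (\<Sum>k\<in>UNIV. (if k = j then A $ i $ j * v $ j else 0))"
    unfolding mat_mul_nth diagm_def by (rule sum.cong) auto
  also have "\<dots> = A $ i $ j * v $ j"
    by simp
  finally show ?thesis .
qed

lemma diagm_mul_nth: "(diagm v ** A) $ i $ j = v $ i * A $ i $ j"
proof -
  have "(diagm v ** A) $ i $ j = (\<Sum>k\<in>UNIV. (if k = i then v $ i * A $ i $ j else 0))"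
    unfolding mat_mul_nth diagm_def by (rule sum.cong) auto
  also have "\<dots> = v $ i * A $ i $ j"
    by simp
  finally show ?thesis .
qed

lemma mat1_nth: "(mat 1 :: complex^'n^'n) $ i $ j = (if i = j then 1 else 0)"
  by (simp add: mat_def)

lemma eig_basis:
  fixes S :: "complex^'n^'n"
  assumes herm: "hermitian S"
  shows "k \<le> CARD('n) \<Longrightarrow> \<exists>f lam. (\<forall>i<k. S *v f i = complex_of_real (lam i) *s f i) \<and>
           (\<forall>i<k. \<forall>j<k. cdot (f i) (f j) = (if i = j then 1 else 0))"
proof (induction k)
  case 0 then show ?case by simp
next
  case (Suc k)
  then obtain f lam where ev: "\<forall>i<k. S *v f i = complex_of_real (lam i) *s f i"
    and on: "\<forall>i<k. \<forall>j<k. cdot (f i) (f j) = (if i = j then 1 else 0)" by auto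
  from Suc.prems have kl: "k < CARD('n)" by simp
  obtain x \<mu> where x: "\<forall>i<k. cdot (f i) x = 0" "cdot x x = 1" "S *v x = complex_of_real \<mu> *s x"
    using rayleigh_max[OF herm ev kl] by blast
  have x': "\<forall>i<k. cdot x (f i) = 0" using x(1) cdot_cnj by (metis complex_cnj_zero)
  define f' where "f' = f(k := x)"
  define lam' where "lam' = lam(k := \<mu>)"
  have "\<forall>i<Suc k. S *v f' i = complex_of_real (lam' i) *s f' i"
    using ev x(3) by (auto simp: f'_def lam'_def less_Suc_eq)
  moreover have "\<forall>i<Suc k. \<forall>j<Suc k. cdot (f' i) (f' j) = (if i = j then 1 else 0)"
    using on x(1,2) x' by (auto simp: f'_def less_Suc_eq)
  ultimately show ?case by blast
qed

lemma spectral: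
  fixes S :: "complex^'n^'n"
  assumes herm: "hermitian S"
  shows "\<exists>(U::complex^'n^'n) d. ctrans U ** U = mat 1 \<and> U ** ctrans U = mat 1 \<and>
     S ** U = U ** diagm (\<chi> j. complex_of_real (d j)) \<and>
     (\<forall>j. Re (cdot (column j U) (S *v column j U)) = d j)"
proof -
  obtain f lam where ev: "\<forall>i<CARD('n). S *v f i = complex_of_real (lam i) *s f i"
    and on: "\<forall>i<CARD('n). \<forall>j<CARD('n). cdot (f i) (f j) = (if i = j then 1 else 0)"
    using eig_basis[OF herm, of "CARD('n)"] by auto
  obtain h :: "'n \<Rightarrow> nat" where h: "bij_betw h UNIV {0..<CARD('n)}"
    using ex_bij_betw_finite_nat[of "UNIV::'n set"] by auto
  have hlt: "h j < CARD('n)" for j using h unfolding bij_betw_def by auto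
  have hinj: "h j = h l \<longleftrightarrow> j = l" for j l using h unfolding bij_betw_def inj_on_def by auto
  define U :: "complex^'n^'n" where "U = (\<chi> i j. f (h j) $ i)"
  define d where "d j = lam (h j)" for j
  have col: "column j U = f (h j)" for j by (simp add: U_def column_def vec_eq_iff)
  have UU: "ctrans U ** U = mat 1"
  proof -
    have "(ctrans U ** U) $ j $ l = cdot (f (h j)) (f (h l))" for j l
      by (simp add: mat_mul_nth U_def cdot_def)
    then show ?thesis using on hlt hinj by (simp add: vec_eq_iff mat1_nth)
  qed
  then have UU2: "U ** ctrans U = mat 1" using matrix_left_right_inverse by blast
  have SU: "S ** U = U ** diagm (\<chi> j. complex_of_real (d j))"
  proof -
    have "(S ** U) $ i $ j = (S *v f (h j)) $ i" for i j
      by (simp add: mat_mul_nth mat_vec_nth U_def)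
    also have "(S *v f (h j)) $ i = complex_of_real (d j) * f (h j) $ i" for i j
      using ev hlt by (simp add: d_def)
    finally show ?thesis by (simp add: vec_eq_iff mul_diagm_nth U_def mult.commute)
  qed
  have "Re (cdot (column j U) (S *v column j U)) = d j" for j
    using ev hlt on unfolding col by (simp add: d_def cdot_scale_right)
  then have "ctrans U ** U = mat 1 \<and> U ** ctrans U = mat 1 \<and>
     S ** U = U ** diagm (\<chi> j. complex_of_real (d j)) \<and>
     (\<forall>j. Re (cdot (column j U) (S *v column j U)) = d j)" using UU UU2 SU by blast
  then show ?thesis by blast
qed

definition pd :: "complex^'n^'n \<Rightarrow> bool" where
  "pd A \<longleftrightarrow> hermitian A \<and> (\<forall>x. x \<noteq> 0 \<longrightarrow> 0 < Re (cdot x (A *v x)))"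

lemma mm_add_r: "(A + B) ** C = A ** C + B ** (C :: 'a::semiring_1^'p^'n)"
  by (simp add: matrix_matrix_mult_def vec_eq_iff distrib_right sum.distrib)
lemma mm_diff_l: "A ** (B - C) = A ** B - A ** (C :: 'a::ring_1^'p^'n)"
  by (simp add: matrix_matrix_mult_def vec_eq_iff right_diff_distrib sum_subtractf)
lemma mm_diff_r: "(A - B) ** C = A ** C - B ** (C :: 'a::ring_1^'p^'n)"
  by (simp add: matrix_matrix_mult_def vec_eq_iff left_diff_distrib sum_subtractf)

lemma ctrans_mul_nth: "(ctrans A ** B) $ i $ j = cdot (column i A) (column j B)"
  by (simp add: mat_mul_nth cdot_def column_def)

lemma det_diagm: "det (diagm v) = (\<Prod>i\<in>UNIV. v $ i)"
  by (subst det_diagonal) (simp_all add: diagm_def)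

lemma trace_diagm: "trace (diagm v) = (\<Sum>i\<in>UNIV. v $ i)"
  by (simp add: trace_def diagm_def)

lemma diagm_mult: "diagm a ** diagm b = diagm (\<chi> i. a $ i * b $ i)"
  by (simp add: vec_eq_iff mul_diagm_nth) (simp add: diagm_def)

lemma ctrans_diagm_real: "ctrans (diagm (\<chi> j. complex_of_real (d j))) = diagm (\<chi> j. complex_of_real (d j))"
  by (simp add: vec_eq_iff diagm_def)

lemma spectral_form:
  assumes "ctrans U ** U = mat 1" "U ** ctrans U = mat 1" "S ** U = U ** D"
  shows "S = U ** D ** ctrans U"
proof -
  have "S = S ** (U ** ctrans U)" using assms by simp
  also have "\<dots> = U ** D ** ctrans U" by (simp add: matrix_mul_assoc assms(3))
  finally show ?thesis .
qed

lemma det_unitary_conj: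
  fixes U :: "complex^'n^'n"
  assumes "ctrans U ** U = mat 1"
  shows "det (U ** D ** ctrans U) = det D"
proof -
  have "det (U ** D ** ctrans U) = det D * (det (ctrans U) * det U)"
    by (simp add: det_mul)
  also have "det (ctrans U) * det U = 1"
    using assms by (metis det_I det_mul)
  finally show ?thesis by simp
qed

lemma trace_unitary_conj:
  fixes U :: "complex^'n^'n"
  assumes "ctrans U ** U = mat 1"
  shows "trace (U ** D ** ctrans U) = trace D"
proof -
  have "trace (U ** D ** ctrans U) = trace (U ** (D ** ctrans U))" by (simp add: matrix_mul_assoc)
  also have "\<dots> = trace ((D ** ctrans U) ** U)" by (rule trace_mul_sym)
  also have "\<dots> = trace D" by (simp add: matrix_mul_assoc[symmetric] assms)
  finally show ?thesis .
qed

lemma unitary_col_nz: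
  assumes "ctrans U ** U = mat 1"
  shows "column j (U::complex^'n^'n) \<noteq> 0"
proof
  assume "column j U = 0"
  then have "(ctrans U ** U) $ j $ j = 0" by (simp add: ctrans_mul_nth)
  then show False using assms by (simp add: mat1_nth)
qed

lemma pd_spectral:
  fixes S :: "complex^'n^'n"
  assumes "pd S"
  shows "\<exists>(U::complex^'n^'n) d. ctrans U ** U = mat 1 \<and> U ** ctrans U = mat 1 \<and>
     S = U ** diagm (\<chi> j. complex_of_real (d j)) ** ctrans U \<and> (\<forall>j. d j > 0)"
proof -
  from assms have herm: "hermitian S" by (simp add: pd_def)
  obtain U :: "complex^'n^'n" and d where U: "ctrans U ** U = mat 1" "U ** ctrans U = mat 1"
    "S ** U = U ** diagm (\<chi> j. complex_of_real (d j))"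
    "\<forall>j. Re (cdot (column j U) (S *v column j U)) = d j"
    using spectral[OF herm] by blast
  have "d j > 0" for j
    using assms unitary_col_nz[OF U(1), of j] U(4) by (auto simp: pd_def)
  then show ?thesis using spectral_form[OF U(1-3)] U(1,2) by blast
qed

lemma logdet_ineq:
  fixes S :: "complex^'n^'n"
  assumes "pd S"
  shows "\<exists>r>0. det S = complex_of_real r \<and> ln r \<le> Re (trace S) - real CARD('n)"
proof -
  obtain U :: "complex^'n^'n" and d where U: "ctrans U ** U = mat 1"
    and S: "S = U ** diagm (\<chi> j. complex_of_real (d j)) ** ctrans U" and d: "\<forall>j. d j > 0"
    using pd_spectral[OF assms] by blast
  have "det S = complex_of_real (\<Prod>j\<in>UNIV. d j)"
    unfolding S det_unitary_conj[OF U] det_diagm by simp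
  moreover have "Re (trace S) = (\<Sum>j\<in>UNIV. d j)"
    unfolding S trace_unitary_conj[OF U] trace_diagm by simp
  moreover have "ln (\<Prod>j\<in>UNIV. d j) \<le> (\<Sum>j\<in>UNIV. d j) - real CARD('n)"
  proof -
    have "ln (\<Prod>j\<in>UNIV. d j) = (\<Sum>j\<in>UNIV. ln (d j))"
      using d by (intro ln_prod) (simp_all add: less_imp_neq[symmetric])
    also have "\<dots> \<le> (\<Sum>j\<in>UNIV. d j - 1)"
      using d by (intro sum_mono ln_le_minus_one) auto
    also have "\<dots> = (\<Sum>j\<in>UNIV. d j) - real CARD('n)"
      by (simp add: sum_subtractf)
    finally show ?thesis .
  qed
  moreover have "(\<Prod>j\<in>UNIV. d j) > 0" using d by (simp add: prod_pos)
  ultimately show ?thesis by (intro exI[of _ "\<Prod>j\<in>UNIV. d j"]) simp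
qed

lemma column_mm: "column j (A ** B) = A *v column j B"
  by (simp add: vec_eq_iff column_def mat_mul_nth mat_vec_nth)

lemma trace_psd:
  fixes W :: "complex^'d^'d" and X :: "complex^'m^'d"
  assumes "\<forall>x. 0 \<le> Re (cdot x (W *v x))"
  shows "0 \<le> Re (trace (W ** X ** ctrans X))"
proof -
  have "trace (W ** X ** ctrans X) = trace (ctrans X ** (W ** X))" by (rule trace_mul_sym)
  also have "\<dots> = (\<Sum>j\<in>UNIV. cdot (column j X) (W *v column j X))"
    by (simp add: trace_def ctrans_mul_nth column_mm)
  finally have "Re (trace (W ** X ** ctrans X)) = (\<Sum>j\<in>UNIV. Re (cdot (column j X) (W *v column j X)))"
    by simp
  then show ?thesis using assms by (simp add: sum_nonneg)
qed

lemma cdot_PPh: "cdot x ((P ** ctrans P) *v x) = cdot (ctrans P *v x) (ctrans P *v x)"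
  by (simp add: matrix_vector_mul_assoc[symmetric] cdot_mat)

lemma pd_I_plus: "pd (mat 1 + P ** ctrans P)"
proof -
  have h: "hermitian (mat 1 + P ** ctrans P)"
    by (simp add: hermitian_def ctrans_add ctrans_mult)
  have "0 < Re (cdot x ((mat 1 + P ** ctrans P) *v x))" if "x \<noteq> 0" for x
  proof -
    have "cdot x ((mat 1 + P ** ctrans P) *v x) = cdot x x + cdot (ctrans P *v x) (ctrans P *v x)"
      by (simp add: matrix_vector_mult_add_rdistrib cdot_add_right cdot_PPh)
    then show ?thesis using cdot_self_pos[OF that] cdot_self_nonneg[of "ctrans P *v x"] by simp
  qed
  then show ?thesis using h by (simp add: pd_def)
qed

lemma pd_psd: "pd W \<Longrightarrow> \<forall>x. 0 \<le> Re (cdot x (W *v x))"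
  unfolding pd_def by (metis cdot_zero_left order_le_less zero_complex.simps(1))

lemma diagm_one: "diagm (\<chi> j. 1) = (mat 1 :: complex^'n^'n)"
  by (simp add: vec_eq_iff diagm_def mat1_nth)

lemma real_diag_cancel:
  assumes "\<forall>j. (e::'n::finite \<Rightarrow> real) j > 0"
  shows "diagm (\<chi> j. complex_of_real (1 / sqrt (e j))) ** diagm (\<chi> j. complex_of_real (e j)) ** diagm (\<chi> j. complex_of_real (1 / sqrt (e j))) = mat 1"
    and "diagm (\<chi> j. complex_of_real (e j)) ** (diagm (\<chi> j. complex_of_real (1 / sqrt (e j))) ** diagm (\<chi> j. complex_of_real (1 / sqrt (e j)))) = mat 1"
    and "diagm (\<chi> j. complex_of_real (sqrt (e j))) ** diagm (\<chi> j. complex_of_real (1 / sqrt (e j))) = mat 1"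
proof -
  have a: "complex_of_real (1 / sqrt (e j)) * complex_of_real (e j) * complex_of_real (1 / sqrt (e j)) = 1" for j
  proof -
    have "sqrt (e j) * sqrt (e j) = e j" using assms by (simp add: less_imp_le)
    moreover have "sqrt (e j) > 0" using assms by simp
    ultimately have "(1 / sqrt (e j)) * e j * (1 / sqrt (e j)) = 1" by (simp add: field_simps)
    then have "complex_of_real ((1 / sqrt (e j)) * e j * (1 / sqrt (e j))) = 1" by simp
    then show ?thesis by (simp only: of_real_mult)
  qed
  have b: "complex_of_real (sqrt (e j)) * complex_of_real (1 / sqrt (e j)) = 1" for j
  proof -
    have "sqrt (e j) > 0" using assms by simp
    then have "sqrt (e j) * (1 / sqrt (e j)) = 1" by simp
    then have "complex_of_real (sqrt (e j) * (1 / sqrt (e j))) = 1" by simp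
    then show ?thesis by (simp only: of_real_mult)
  qed
  show "diagm (\<chi> j. complex_of_real (1 / sqrt (e j))) ** diagm (\<chi> j. complex_of_real (e j)) ** diagm (\<chi> j. complex_of_real (1 / sqrt (e j))) = mat 1"
    unfolding diagm_mult using a by (simp add: diagm_one)
  show "diagm (\<chi> j. complex_of_real (e j)) ** (diagm (\<chi> j. complex_of_real (1 / sqrt (e j))) ** diagm (\<chi> j. complex_of_real (1 / sqrt (e j)))) = mat 1"
    unfolding diagm_mult using a by (simp add: diagm_one mult_ac)
  show "diagm (\<chi> j. complex_of_real (sqrt (e j))) ** diagm (\<chi> j. complex_of_real (1 / sqrt (e j))) = mat 1"
    unfolding diagm_mult using b by (simp add: diagm_one)
qed

lemma pd_inverse_sqrt:
  fixes G :: "complex^'d^'d"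
  assumes "pd G"
  shows "\<exists>T::complex^'d^'d. ctrans T ** G ** T = mat 1 \<and> G ** (T ** ctrans T) = mat 1 \<and>
      (\<forall>x. T *v x = 0 \<longrightarrow> x = 0)"
proof -
  obtain V :: "complex^'d^'d" and e where V: "ctrans V ** V = mat 1" "V ** ctrans V = mat 1"
    and G: "G = V ** diagm (\<chi> j. complex_of_real (e j)) ** ctrans V" and e: "\<forall>j. e j > 0"
    using pd_spectral[OF assms] by blast
  define De :: "complex^'d^'d" where "De = diagm (\<chi> j. complex_of_real (e j))"
  define Dm :: "complex^'d^'d" where "Dm = diagm (\<chi> j. complex_of_real (1 / sqrt (e j)))"
  define Dp :: "complex^'d^'d" where "Dp = diagm (\<chi> j. complex_of_real (sqrt (e j)))"
  note canc = real_diag_cancel[OF e, folded De_def Dm_def Dp_def]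
  define T where "T = V ** Dm"
  have cT: "ctrans T = Dm ** ctrans V" unfolding T_def Dm_def ctrans_mult ctrans_diagm_real by (rule refl)
  have "ctrans T ** G ** T = Dm ** (ctrans V ** V) ** De ** (ctrans V ** V) ** Dm"
    unfolding cT unfolding G T_def De_def by (simp add: matrix_mul_assoc)
  also have "\<dots> = mat 1" using V canc(1) by simp
  finally have 1: "ctrans T ** G ** T = mat 1" .
  have "G ** (T ** ctrans T) = V ** (De ** (ctrans V ** V) ** (Dm ** Dm)) ** ctrans V"
    unfolding cT unfolding G T_def De_def by (simp add: matrix_mul_assoc)
  also have "\<dots> = mat 1" using V canc(2) by simp
  finally have 2: "G ** (T ** ctrans T) = mat 1" .
  have "Dp ** ctrans V ** T = Dp ** (ctrans V ** V) ** Dm"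
    unfolding T_def by (simp add: matrix_mul_assoc)
  also have "\<dots> = mat 1" using V canc(3) by simp
  finally have "Dp ** ctrans V ** T = mat 1" .
  then have 3: "\<forall>x. T *v x = 0 \<longrightarrow> x = 0"
    by (metis matrix_vector_mul_assoc matrix_vector_mul_lid matrix_vector_mult_0_right)
  show ?thesis using 1 2 3 by blast
qed

lemma MI:
  fixes P U :: "complex^'n^'d" and W :: "complex^'d^'d"
  assumes pdW: "pd W"
  shows "ln (Re (det W)) + real CARD('d)
    - Re (trace (W ** (mat 1 - U ** ctrans P - P ** ctrans U + U ** (mat 1 + ctrans P ** P) ** ctrans U)))
    \<le> ln (Re (det (mat 1 + P ** ctrans P)))"
proof -
  define G where "G = mat 1 + P ** ctrans P"
  define K where "K = mat 1 + ctrans P ** P"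
  define E where "E = mat 1 - U ** ctrans P - P ** ctrans U + U ** K ** ctrans U"
  have pdG: "pd G" unfolding G_def by (rule pd_I_plus)
  obtain T :: "complex^'d^'d" where T1: "ctrans T ** G ** T = mat 1" and T2: "G ** (T ** ctrans T) = mat 1"
    and T3: "\<forall>x. T *v x = 0 \<longrightarrow> x = 0"
    using pd_inverse_sqrt[OF pdG] by blast
  define Gi where "Gi = T ** ctrans T"
  have GGi: "G ** Gi = mat 1" using T2 by (simp add: Gi_def)
  have GiG: "Gi ** G = mat 1" using GGi matrix_left_right_inverse by blast
  have hGi: "ctrans Gi = Gi" by (simp add: Gi_def ctrans_mult)
  define S where "S = ctrans T ** W ** T"
  have hW: "ctrans W = W" using pdW by (simp add: pd_def hermitian_def)
  have pdS: "pd S"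
  proof -
    have "hermitian S" unfolding hermitian_def S_def by (simp add: ctrans_mult hW matrix_mul_assoc)
    moreover have "0 < Re (cdot x (S *v x))" if "x \<noteq> 0" for x
    proof -
      have "cdot x (S *v x) = cdot (T *v x) (W *v (T *v x))"
        unfolding S_def by (simp add: matrix_vector_mul_assoc[symmetric] cdot_mat)
      moreover have "T *v x \<noteq> 0" using T3 that by blast
      ultimately show ?thesis using pdW by (simp add: pd_def)
    qed
    ultimately show ?thesis by (simp add: pd_def)
  qed
  obtain rW where rW: "rW > 0" "det W = complex_of_real rW" using logdet_ineq[OF pdW] by blast
  obtain rG where rG: "rG > 0" "det G = complex_of_real rG" using logdet_ineq[OF pdG] by blast
  obtain rS where rS: "rS > 0" "det S = complex_of_real rS" "ln rS \<le> Re (trace S) - real CARD('d)"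
    using logdet_ineq[OF pdS] by blast
  have "det (ctrans T ** G ** T) = 1" using T1 by simp
  then have "det (ctrans T) * det G * det T = 1" by (simp only: det_mul)
  moreover have "det S = det (ctrans T) * det W * det T" by (simp add: S_def det_mul)
  ultimately have "det S * det G = det W" by (simp add: algebra_simps)
  then have "complex_of_real (rS * rG) = complex_of_real rW" using rW rS rG by simp
  then have "rS * rG = rW" by (simp only: of_real_eq_iff)
  then have "ln rW = ln rS + ln rG" using ln_mult[of rS rG] rS(1) rG(1) by simp
  then have lnS: "ln rS = ln rW - ln rG" by simp
  have "trace S = trace ((ctrans T ** W) ** T)" by (simp add: S_def)
  also have "\<dots> = trace (T ** (ctrans T ** W))" by (rule trace_mul_sym)
  also have "\<dots> = trace (Gi ** W)" by (simp add: Gi_def matrix_mul_assoc)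
  also have "\<dots> = trace (W ** Gi)" by (rule trace_mul_sym)
  finally have trS: "trace S = trace (W ** Gi)" .
  define Y where "Y = U - Gi ** P"
  define Z where "Z = Y ** ctrans P"
  have PK: "P ** K = G ** P"
    unfolding K_def G_def by (simp add: matrix_add_ldistrib mm_add_r matrix_mul_assoc)
  have KP: "K ** ctrans P = ctrans P ** G"
    unfolding K_def G_def by (simp add: matrix_add_ldistrib mm_add_r matrix_mul_assoc)
  have cY: "ctrans Y = ctrans U - ctrans P ** Gi" unfolding Y_def by (simp add: ctrans_diff ctrans_mult hGi)
  have "Y ** K = U ** K - Gi ** (P ** K)" unfolding Y_def by (simp add: mm_diff_r matrix_mul_assoc)
  also have "Gi ** (P ** K) = P" unfolding PK by (simp add: matrix_mul_assoc GiG)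
  finally have YK: "Y ** K = U ** K - P" .
  have a1: "U ** K ** (ctrans P ** Gi) = U ** ctrans P"
  proof -
    have "U ** K ** (ctrans P ** Gi) = U ** ((K ** ctrans P) ** Gi)" by (simp add: matrix_mul_assoc)
    also have "\<dots> = U ** ctrans P" unfolding KP by (simp add: matrix_mul_assoc[symmetric] GGi)
    finally show ?thesis .
  qed
  have a2: "P ** (ctrans P ** Gi) = mat 1 - Gi"
  proof -
    have "P ** ctrans P = G - mat 1" by (simp add: G_def)
    then have "P ** (ctrans P ** Gi) = (G - mat 1) ** Gi" by (simp add: matrix_mul_assoc)
    also have "\<dots> = mat 1 - Gi" by (simp add: mm_diff_r GGi)
    finally show ?thesis .
  qed
  have "Y ** K ** ctrans Y = (U ** K - P) ** (ctrans U - ctrans P ** Gi)" by (simp add: YK cY)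
  also have "\<dots> = U ** K ** ctrans U - U ** K ** (ctrans P ** Gi) - (P ** ctrans U - P ** (ctrans P ** Gi))"
    by (simp add: mm_diff_l mm_diff_r)
  also have "\<dots> = E - Gi" unfolding a1 a2 E_def by (simp add: algebra_simps)
  finally have YKY: "Y ** K ** ctrans Y = E - Gi" .
  have cZ: "ctrans Z = P ** ctrans Y" by (simp add: Z_def ctrans_mult)
  have "Y ** K ** ctrans Y = Y ** ctrans Y + Z ** ctrans Z"
    unfolding cZ unfolding Z_def K_def by (simp add: matrix_add_ldistrib mm_add_r matrix_mul_assoc)
  then have Edec: "E = Gi + Y ** ctrans Y + Z ** ctrans Z" using YKY by (simp add: algebra_simps)
  have trE: "trace (W ** E) = trace (W ** Gi) + trace (W ** Y ** ctrans Y) + trace (W ** Z ** ctrans Z)"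
    unfolding Edec by (simp add: matrix_add_ldistrib trace_add matrix_mul_assoc)
  have p1: "0 \<le> Re (trace (W ** Y ** ctrans Y))" by (rule trace_psd[OF pd_psd[OF pdW]])
  have p2: "0 \<le> Re (trace (W ** Z ** ctrans Z))" by (rule trace_psd[OF pd_psd[OF pdW]])
  have "Re (trace (W ** Gi)) \<le> Re (trace (W ** E))" using trE p1 p2 by simp
  moreover have "ln rW - ln rG \<le> Re (trace (W ** Gi)) - real CARD('d)" using rS(3) lnS trS by simp
  moreover have "Re (det W) = rW" "Re (det G) = rG" using rW rG by simp_all
  ultimately show ?thesis unfolding E_def[symmetric] K_def[symmetric] G_def[symmetric] by simp
qed

lemma matrix_inv_eq:
  fixes A B :: "complex^'n^'n"
  assumes "A ** B = mat 1"
  shows "matrix_inv A = B"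
proof -
  have BA: "B ** A = mat 1" using assms matrix_left_right_inverse by blast
  have "\<exists>A'. A ** A' = mat 1 \<and> A' ** A = mat 1" using assms BA by blast
  then have "A ** matrix_inv A = mat 1 \<and> matrix_inv A ** A = mat 1"
    unfolding matrix_inv_def by (rule someI_ex)
  then have "matrix_inv A = (B ** A) ** matrix_inv A" using BA by simp
  also have "\<dots> = B ** (A ** matrix_inv A)" by (simp add: matrix_mul_assoc)
  also have "\<dots> = B" using \<open>A ** matrix_inv A = mat 1 \<and> _\<close> by simp
  finally show ?thesis .
qed

lemma ctrans_diagm: "ctrans (diagm q) = diagm (\<chi> i. cnj (q $ i))"
  by (simp add: vec_eq_iff diagm_def)

lemma trace_hadamard:
  "trace (ctrans (diagm q) ** A ** diagm q ** B) = cdot q (hadamard A (transpose B) *v q)"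
proof -
  have "trace (ctrans (diagm q) ** A ** diagm q ** B) = (\<Sum>i\<in>UNIV. \<Sum>j\<in>UNIV. cnj (q $ i) * A $ i $ j * q $ j * B $ j $ i)"
  proof -
    have e: "(ctrans (diagm q) ** A ** diagm q) $ i $ j = cnj (q $ i) * A $ i $ j * q $ j" for i j
      by (simp add: mul_diagm_nth ctrans_diagm diagm_mul_nth)
    show ?thesis unfolding trace_def mat_mul_nth[of "ctrans (diagm q) ** A ** diagm q"] e ..
  qed
  also have "\<dots> = cdot q (hadamard A (transpose B) *v q)"
    unfolding cdot_def hadamard_def by (simp add: mat_vec_nth transpose_def sum_distrib_left mult_ac)
  finally show ?thesis .
qed

lemma trace_diagv: "trace (A ** ctrans (diagm q)) = cdot q (diagv A)"
proof -
  have e: "(A ** ctrans (diagm q)) $ i $ i = cnj (q $ i) * A $ i $ i" for i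
    by (simp add: ctrans_diagm mul_diagm_nth mult.commute)
  show ?thesis unfolding trace_def e cdot_def diagv_def by simp
qed

lemma diagm_vec_nth: "(diagm v *v w) $ j = v $ j * w $ j"
proof -
  have "(diagm v *v w) $ j = (\<Sum>k\<in>UNIV. if k = j then v $ j * w $ j else 0)"
    unfolding mat_vec_nth diagm_def by (rule sum.cong) auto
  then show ?thesis by simp
qed

lemma hadamard_herm:
  assumes "hermitian A" "hermitian B"
  shows "hermitian (hadamard A (transpose B))"
proof -
  have a: "cnj (A $ j $ i) = A $ i $ j" for i j using assms(1) unfolding hermitian_def
    by (metis ctrans_nth)
  have b: "cnj (B $ j $ i) = B $ i $ j" for i j using assms(2) unfolding hermitian_def
    by (metis ctrans_nth)
  show ?thesis unfolding hermitian_def hadamard_def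
    by (simp add: vec_eq_iff transpose_def a b)
qed

lemma unimod_cdot: "unimod q \<Longrightarrow> cdot q q = of_nat CARD('n)"
  for q :: "complex^'n"
  unfolding unimod_def cdot_self by simp

lemma eig_bound:
  fixes Z :: "complex^'n^'n"
  assumes herm: "hermitian Z"
  shows "Re (cdot x (Z *v x)) \<le> lambda1 Z * Re (cdot x x)"
proof -
  obtain U :: "complex^'n^'n" and d where U: "ctrans U ** U = mat 1" "U ** ctrans U = mat 1"
    "Z ** U = U ** diagm (\<chi> j. complex_of_real (d j))"
    using spectral[OF herm] by blast
  define D :: "complex^'n^'n" where "D = diagm (\<chi> j. complex_of_real (d j))"
  define Ev where "Ev = {x::real. \<exists>v. v \<noteq> 0 \<and> Z *v v = complex_of_real x *s v}"
  have sub: "Ev \<subseteq> range d"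
  proof
    fix y assume "y \<in> Ev"
    then obtain v where v: "v \<noteq> 0" "Z *v v = complex_of_real y *s v" by (auto simp: Ev_def)
    define w where "w = ctrans U *v v"
    have Uw: "U *v w = v" by (simp add: w_def matrix_vector_mul_assoc U(2))
    then have "w \<noteq> 0" using v(1) by auto
    then obtain j where j: "w $ j \<noteq> 0" by (auto simp: vec_eq_iff)
    have "ctrans U *v (Z *v (U *v w)) = (ctrans U ** (Z ** U)) *v w"
      by (simp add: matrix_vector_mul_assoc matrix_mul_assoc)
    also have "\<dots> = ((ctrans U ** U) ** D) *v w" by (simp add: U(3) D_def matrix_mul_assoc)
    also have "\<dots> = D *v w" by (simp add: U(1))
    finally have "D *v w = ctrans U *v (Z *v (U *v w))" by simp
    also have "\<dots> = complex_of_real y *s w" using v(2) Uw by (simp add: vector_scalar_commute w_def)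
    finally have "(D *v w) $ j = complex_of_real y * w $ j" by simp
    moreover have "(D *v w) $ j = complex_of_real (d j) * w $ j"
      unfolding D_def diagm_vec_nth by simp
    ultimately have "complex_of_real (d j) = complex_of_real y" using j by simp
    then show "y \<in> range d" by auto
  qed
  then have finEv: "finite Ev" by (rule finite_subset) simp
  have dEv: "d j \<in> Ev" for j
  proof -
    have "Z *v column j U = complex_of_real (d j) *s column j U"
    proof -
      have "Z *v column j U = column j (Z ** U)" by (simp add: column_mm)
      also have "\<dots> = column j (U ** D)" using U(3) by (simp add: D_def)
      also have "\<dots> = complex_of_real (d j) *s column j U"
        by (simp add: vec_eq_iff column_def D_def mul_diagm_nth mult.commute)
      finally show ?thesis .
    qed
    then show ?thesis using unitary_col_nz[OF U(1)] by (auto simp: Ev_def)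
  qed
  have dle: "d j \<le> lambda1 Z" for j
    unfolding lambda1_def using finEv dEv[of j] by (simp add: Ev_def[symmetric] Max_ge)
  define w where "w = ctrans U *v x"
  have ZU: "Z = U ** D ** ctrans U" using spectral_form[OF U] by (simp add: D_def)
  have "cdot x (Z *v x) = cdot w (D *v w)"
    unfolding ZU w_def by (simp add: matrix_vector_mul_assoc[symmetric] cdot_mat)
  also have "\<dots> = (\<Sum>j\<in>UNIV. complex_of_real (d j * (cmod (w $ j))\<^sup>2))"
    unfolding cdot_def D_def diagm_vec_nth
    by (rule sum.cong) (simp_all add: complex_norm_square mult_ac flip: of_real_power)
  finally have "Re (cdot x (Z *v x)) = (\<Sum>j\<in>UNIV. d j * (cmod (w $ j))\<^sup>2)" by simp
  also have "\<dots> \<le> (\<Sum>j\<in>UNIV. lambda1 Z * (cmod (w $ j))\<^sup>2)"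
    by (intro sum_mono mult_right_mono dle) simp
  also have "\<dots> = lambda1 Z * Re (cdot w w)" by (simp add: cdot_self_Re sum_distrib_left)
  also have "cdot w w = cdot x x"
    unfolding w_def by (simp add: cdot_mat matrix_vector_mul_assoc U(2))
  finally show ?thesis .
qed

lemma cdot_mat_scalar: "cdot y (mat c *v x) = c * cdot y x"
proof -
  have "(mat c *v x) $ i = (c *s x) $ i" for i
  proof -
    have "(mat c *v x) $ i = (\<Sum>j\<in>UNIV. if j = i then c * x $ i else 0)"
      unfolding mat_vec_nth mat_def by (rule sum.cong) auto
    then show ?thesis by simp
  qed
  then have "mat c *v x = c *s x" by (simp add: vec_eq_iff)
  then show ?thesis by (simp add: cdot_scale_right)
qed

lemma majorize:
  fixes Z :: "complex^'n^'n" and q qt :: "complex^'n"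
  assumes herm: "hermitian Z" and uq: "unimod q" and uqt: "unimod qt"
  shows "- 2 * real CARD('n) * lambda1 Z + 2 * Re (cdot q ((mat (complex_of_real (lambda1 Z)) - Z) *v qt))
      + Re (cdot qt (Z *v qt)) \<le> - Re (cdot q (Z *v q))"
proof -
  define l where "l = lambda1 Z"
  define M where "M = mat (complex_of_real l) - Z"
  have hM: "hermitian M" using herm
    by (simp add: M_def hermitian_def ctrans_diff ctrans_mat)
  define x where "x = q - qt"
  have "Re (cdot x (Z *v x)) \<le> l * Re (cdot x x)" unfolding l_def by (rule eig_bound[OF herm])
  then have pos: "0 \<le> Re (cdot x (M *v x))"
    by (simp add: M_def matrix_vector_mult_diff_rdistrib cdot_diff_right cdot_mat_scalar)
  have sw: "Re (cdot qt (M *v q)) = Re (cdot q (M *v qt))"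
  proof -
    have "cdot qt (M *v q) = cnj (cdot (M *v q) qt)" by (simp add: cdot_cnj)
    also have "cdot (M *v q) qt = cdot q (M *v qt)" using herm_cdot_swap[OF hM, of q qt] by simp
    finally show ?thesis by simp
  qed
  have cq: "Re (cdot q (M *v q)) = l * real CARD('n) - Re (cdot q (Z *v q))"
    by (simp add: M_def matrix_vector_mult_diff_rdistrib cdot_diff_right cdot_mat_scalar unimod_cdot[OF uq])
  have cqt: "Re (cdot qt (M *v qt)) = l * real CARD('n) - Re (cdot qt (Z *v qt))"
    by (simp add: M_def matrix_vector_mult_diff_rdistrib cdot_diff_right cdot_mat_scalar unimod_cdot[OF uqt])
  have "cdot x (M *v x) = cdot q (M *v q) - cdot q (M *v qt) - cdot qt (M *v q) + cdot qt (M *v qt)"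
    by (simp add: x_def matrix_vector_mult_diff_distrib cdot_diff_left cdot_diff_right)
  then have "Re (cdot x (M *v x)) = Re (cdot q (M *v q)) - 2 * Re (cdot q (M *v qt)) + Re (cdot qt (M *v qt))"
    using sw by simp
  moreover have "2 * real CARD('n) * l = 2 * (l * real CARD('n))" by simp
  ultimately show ?thesis using pos cq cqt unfolding M_def[symmetric] l_def[symmetric] by linarith
qed

lemma majorize_eq:
  fixes Z :: "complex^'n^'n" and qt :: "complex^'n"
  assumes uqt: "unimod qt"
  shows "Re (cdot qt ((mat (complex_of_real (lambda1 Z)) - Z) *v qt)) = lambda1 Z * real CARD('n) - Re (cdot qt (Z *v qt))"
  by (simp add: matrix_vector_mult_diff_rdistrib cdot_diff_right cdot_mat_scalar unimod_cdot[OF uqt])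

lemma phase_le:
  assumes "unimod q"
  shows "Re (cdot q v) \<le> (\<Sum>k\<in>UNIV. cmod (v $ k))"
proof -
  have "Re (cnj (q $ k) * v $ k) \<le> cmod (v $ k)" for k
  proof -
    have "Re (cnj (q $ k) * v $ k) \<le> cmod (cnj (q $ k) * v $ k)" by (rule complex_Re_le_cmod)
    also have "\<dots> = cmod (v $ k)" using assms by (simp add: unimod_def norm_mult)
    finally show ?thesis .
  qed
  then show ?thesis unfolding cdot_def by (simp add: sum_mono)
qed

lemma phase_eq:
  assumes "\<forall>k. v $ k \<noteq> 0 \<longrightarrow> qs $ k = exp (\<i> * complex_of_real (Arg (v $ k)))"
  shows "Re (cdot qs v) = (\<Sum>k\<in>UNIV. cmod (v $ k))"
proof -
  have "Re (cnj (qs $ k) * v $ k) = cmod (v $ k)" for k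
  proof (cases "v $ k = 0")
    case True then show ?thesis by simp
  next
    case False
    define r where "r = cmod (v $ k)"
    have r: "r > 0" using False by (simp add: r_def)
    have "qs $ k = sgn (v $ k)" using assms cis_Arg[OF False] False by (simp add: cis_conv_exp)
    also have "sgn (v $ k) = v $ k / complex_of_real r" by (simp add: r_def sgn_eq)
    finally have "cnj (qs $ k) * v $ k = cnj (v $ k) * v $ k / complex_of_real r" by simp
    also have "cnj (v $ k) * v $ k = complex_of_real (r * r)"
      using complex_norm_square[of "v $ k"] by (simp add: r_def power2_eq_square mult.commute)
    also have "complex_of_real (r * r) / complex_of_real r = complex_of_real r"
      using r by (simp add: flip: of_real_divide)
    finally have "cnj (qs $ k) * v $ k = complex_of_real (cmod (v $ k))" by (simp add: r_def)
    then show ?thesis by simp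
  qed
  then show ?thesis unfolding cdot_def by simp
qed

theorem proposition3:
  fixes H_AI :: "complex^'m^'n" and H_IB :: "complex^'n^'d"
    and R :: "complex^'m^'m" and qt :: "complex^'n"
    and L Lh :: "complex^'n^'n" and g gt :: "complex^'n \<Rightarrow> real"
    and C1 C2 :: real
    and Pt JB :: "complex^'n^'d" and QB :: "complex^'d^'d"
    and A1 :: "complex^'n^'d" and A2 A4 Z :: "complex^'n^'n" and A3 :: "complex^'d^'n"
    and a4 v :: "complex^'n"
  assumes R_psd: "psd R"
    and Lh_psd: "psd Lh"
    and Lh_sqrt: "Lh ** Lh = L"
    and qt_unimod: "unimod qt"
    and L_def: "L = H_AI ** R ** ctrans H_AI"
    and g_def: "g = (\<lambda>q. ln (Re (det (mat 1 + H_IB ** diagm q ** L ** ctrans (diagm q) ** ctrans H_IB))))"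
    and Pt_def: "Pt = H_IB ** diagm qt ** Lh"
    and QB_def: "QB = mat 1 - Pt ** matrix_inv (mat 1 + ctrans Pt ** Pt) ** ctrans Pt"
    and JB_def: "JB = Pt ** matrix_inv (mat 1 + ctrans Pt ** Pt)"
    and A1_def: "A1 = matrix_inv QB ** JB ** Lh"
    and A2_def: "A2 = ctrans H_IB ** H_IB"
    and A3_def: "A3 = Lh ** ctrans JB"
    and A4_def: "A4 = ctrans H_IB ** matrix_inv QB ** JB ** Lh"
    and Z_def: "Z = hadamard A2 (transpose (A3 ** A1))"
    and a4_def: "a4 = diagv A4"
    and C1_def: "C1 = - ln (Re (det QB)) + real CARD('d) - Re (trace (matrix_inv QB))"
    and C2_def: "C2 = real CARD('d) - Re (trace (matrix_inv QB))
               + Re (trace (matrix_inv QB ** JB ** ctrans Pt ** Pt ** ctrans JB))"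
    and gt_def: "gt = (\<lambda>q. - 2 * real CARD('n) * lambda1 Z
               + 2 * Re (cdot q ((mat (complex_of_real (lambda1 Z)) - Z) *v qt))
               + Re (cdot qt (Z *v qt))
               + 2 * Re (cdot q a4) + C1 + C2)"
    and v_def: "v = (mat (complex_of_real (lambda1 Z)) - Z) *v qt + a4"
  shows "(\<forall>q. unimod q \<longrightarrow> g q \<ge> gt q) \<and> g qt = gt qt
         \<and> (\<forall>qs. unimod qs \<and> (\<forall>k. v $ k \<noteq> 0 \<longrightarrow> qs $ k = exp (\<i> * complex_of_real (Arg (v $ k))))
                \<longrightarrow> (\<forall>q. unimod q \<longrightarrow> gt q \<le> gt qs))"
proof -
  have hLh: "ctrans Lh = Lh" using Lh_psd by (simp add: psd_def hermitian_def)
  define P where "P q = H_IB ** diagm q ** Lh" for q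
  have cP: "ctrans (P q) = Lh ** ctrans (diagm q) ** ctrans H_IB" for q
    by (simp add: P_def ctrans_mult hLh matrix_mul_assoc)
  have gP: "g q = ln (Re (det (mat 1 + P q ** ctrans (P q))))" for q
  proof -
    have "P q ** ctrans (P q) = H_IB ** diagm q ** (Lh ** Lh) ** ctrans (diagm q) ** ctrans H_IB"
      unfolding cP by (simp add: P_def matrix_mul_assoc)
    then show ?thesis by (simp add: g_def Lh_sqrt)
  qed
  have PtP: "Pt = P qt" by (simp add: Pt_def P_def)
  define Kt where "Kt = mat 1 + ctrans Pt ** Pt"
  have pdK: "pd Kt" using pd_I_plus[of "ctrans Pt"] by (simp add: Kt_def)
  obtain T :: "complex^'n^'n" where T: "Kt ** (T ** ctrans T) = mat 1"
    using pd_inverse_sqrt[OF pdK] by blast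
  define Mt where "Mt = matrix_inv Kt"
  have Mt_eq: "Mt = T ** ctrans T" unfolding Mt_def by (rule matrix_inv_eq[OF T])
  have hMt: "ctrans Mt = Mt" by (simp add: Mt_eq ctrans_mult)
  have KM: "Kt ** Mt = mat 1" using T Mt_eq by simp
  have MK: "Mt ** Kt = mat 1" using KM matrix_left_right_inverse by blast
  define W where "W = mat 1 + Pt ** ctrans Pt"
  have pdW: "pd W" unfolding W_def by (rule pd_I_plus)
  have hW: "ctrans W = W" using pdW by (simp add: pd_def hermitian_def)
  have QB2: "QB = mat 1 - Pt ** Mt ** ctrans Pt" by (simp add: QB_def Mt_def Kt_def)
  have JB2: "JB = Pt ** Mt" by (simp add: JB_def Mt_def Kt_def)
  have PW: "ctrans Pt ** W = Kt ** ctrans Pt"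
    unfolding W_def Kt_def by (simp add: matrix_add_ldistrib mm_add_r matrix_mul_assoc)
  have QBW: "QB ** W = mat 1"
  proof -
    have "QB ** W = W - Pt ** Mt ** (ctrans Pt ** W)" by (simp add: QB2 mm_diff_r matrix_mul_assoc)
    also have "Pt ** Mt ** (ctrans Pt ** W) = Pt ** (Mt ** Kt) ** ctrans Pt"
      unfolding PW by (simp add: matrix_mul_assoc)
    also have "\<dots> = Pt ** ctrans Pt" by (simp add: MK)
    finally show ?thesis by (simp add: W_def)
  qed
  have WQB: "W ** QB = mat 1" using QBW matrix_left_right_inverse by blast
  have iQB: "matrix_inv QB = W" by (rule matrix_inv_eq[OF QBW])
  obtain rW where rW: "rW > 0" "det W = complex_of_real rW" using logdet_ineq[OF pdW] by blast
  have "det QB * det W = 1" using QBW by (metis det_I det_mul)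
  then have "det QB = complex_of_real (1 / rW)" using rW by (simp add: field_simps)
  then have lnQB: "ln (Re (det QB)) = - ln rW" using rW by (simp add: ln_div)
  have A1W: "A1 = W ** JB ** Lh" by (simp add: A1_def iQB)
  have A4W: "A4 = ctrans H_IB ** W ** JB ** Lh" by (simp add: A4_def iQB)
  have cJB: "ctrans JB = Mt ** ctrans Pt" by (simp add: JB2 ctrans_mult hMt)
  have t1: "trace (W ** JB ** ctrans (P q)) = cdot q a4" for q
  proof -
    have "trace (W ** JB ** ctrans (P q)) = trace ((W ** JB ** Lh ** ctrans (diagm q)) ** ctrans H_IB)"
      unfolding cP by (simp add: matrix_mul_assoc)
    also have "\<dots> = trace (ctrans H_IB ** (W ** JB ** Lh ** ctrans (diagm q)))" by (rule trace_mul_sym)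
    also have "\<dots> = trace (A4 ** ctrans (diagm q))" by (simp add: A4W matrix_mul_assoc)
    also have "\<dots> = cdot q a4" by (simp add: trace_diagv a4_def)
    finally show ?thesis .
  qed
  have t2: "trace (W ** P q ** ctrans JB) = cnj (trace (W ** JB ** ctrans (P q)))" for q
  proof -
    have "ctrans (JB ** ctrans (P q) ** W) = W ** P q ** ctrans JB"
      by (simp add: ctrans_mult hW matrix_mul_assoc)
    then have "trace (W ** P q ** ctrans JB) = cnj (trace (JB ** ctrans (P q) ** W))"
      by (metis trace_ctrans)
    also have "trace (JB ** ctrans (P q) ** W) = trace (W ** (JB ** ctrans (P q)))" by (rule trace_mul_sym)
    finally show ?thesis by (simp add: matrix_mul_assoc)
  qed
  have t3: "trace (W ** JB ** ctrans (P q) ** P q ** ctrans JB) = cdot q (Z *v q)" for q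
  proof -
    have "trace (W ** JB ** ctrans (P q) ** P q ** ctrans JB)
        = trace ((W ** JB ** Lh) ** (ctrans (diagm q) ** A2 ** diagm q ** Lh ** ctrans JB))"
      unfolding cP by (simp add: P_def A2_def matrix_mul_assoc)
    also have "\<dots> = trace ((ctrans (diagm q) ** A2 ** diagm q ** Lh ** ctrans JB) ** (W ** JB ** Lh))"
      by (rule trace_mul_sym)
    also have "\<dots> = trace (ctrans (diagm q) ** A2 ** diagm q ** (A3 ** A1))"
      by (simp add: A3_def A1W matrix_mul_assoc)
    also have "\<dots> = cdot q (Z *v q)" by (simp add: trace_hadamard Z_def)
    finally show ?thesis .
  qed
  define E where "E q = mat 1 - JB ** ctrans (P q) - P q ** ctrans JB + JB ** (mat 1 + ctrans (P q) ** P q) ** ctrans JB" for q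
  have trE: "trace (W ** E q) = trace W - trace (W ** JB ** ctrans (P q)) - trace (W ** P q ** ctrans JB)
     + trace (W ** JB ** ctrans JB) + trace (W ** JB ** ctrans (P q) ** P q ** ctrans JB)" for q
    unfolding E_def by (simp add: matrix_add_ldistrib mm_add_r mm_diff_l trace_add trace_sub matrix_mul_assoc)
  have ReE: "Re (trace (W ** E q)) = Re (trace W) - 2 * Re (cdot q a4) + Re (trace (W ** JB ** ctrans JB))
      + Re (cdot q (Z *v q))" for q
    using trE[of q] t1[of q] t2[of q] t3[of q] by simp
  have MIq: "ln rW + real CARD('d) - Re (trace (W ** E q)) \<le> g q" for q
    using MI[OF pdW, of JB "P q"] rW by (simp add: gP E_def)
  have X1: "JB ** ctrans Pt = mat 1 - QB" by (simp add: JB2 QB2)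
  have X2: "Pt ** ctrans JB = mat 1 - QB" by (simp add: cJB QB2 matrix_mul_assoc)
  have X3: "JB ** Kt ** ctrans JB = mat 1 - QB"
  proof -
    have "JB ** Kt ** ctrans JB = Pt ** (Mt ** Kt) ** Mt ** ctrans Pt"
      unfolding cJB unfolding JB2 by (simp add: matrix_mul_assoc)
    then show ?thesis by (simp add: MK QB2)
  qed
  have const: "Re (trace (W ** JB ** ctrans JB)) + Re (trace (W ** JB ** ctrans Pt ** Pt ** ctrans JB))
      = Re (trace W) - real CARD('d)"
  proof -
    have "JB ** ctrans JB + JB ** ctrans Pt ** Pt ** ctrans JB = JB ** Kt ** ctrans JB"
      unfolding Kt_def by (simp add: matrix_add_ldistrib mm_add_r matrix_mul_assoc)
    moreover have "W ** JB ** ctrans JB + W ** JB ** ctrans Pt ** Pt ** ctrans JB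
        = W ** (JB ** ctrans JB + JB ** ctrans Pt ** Pt ** ctrans JB)"
      by (simp add: matrix_add_ldistrib matrix_mul_assoc)
    ultimately have "trace (W ** JB ** ctrans JB) + trace (W ** JB ** ctrans Pt ** Pt ** ctrans JB)
        = trace (W ** (mat 1 - QB))"
      unfolding X3 by (simp add: trace_add[symmetric])
    also have "\<dots> = trace W - of_nat CARD('d)" by (simp add: mm_diff_l WQB trace_sub trace_I)
    finally have h: "trace (W ** JB ** ctrans JB) + trace (W ** JB ** ctrans Pt ** Pt ** ctrans JB)
      = trace W - of_nat CARD('d)" .
    show ?thesis using arg_cong[OF h, of Re] by simp
  qed
  have EqtQB: "E qt = QB"
  proof -
    have "E qt = mat 1 - (mat 1 - QB) - (mat 1 - QB) + (mat 1 - QB)"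
      unfolding E_def PtP[symmetric] X1 X2 Kt_def[symmetric] X3 ..
    then show ?thesis by simp
  qed
  have C1v: "C1 = ln rW + real CARD('d) - Re (trace W)" by (simp add: C1_def lnQB iQB)
  have C2v: "C2 = real CARD('d) - Re (trace W) + Re (trace (W ** JB ** ctrans Pt ** Pt ** ctrans JB))"
    by (simp add: C2_def iQB)
  have hZ: "hermitian Z"
  proof -
    have "hermitian A2" by (simp add: hermitian_def A2_def ctrans_mult)
    moreover have "hermitian (A3 ** A1)"
      by (simp add: hermitian_def A3_def A1W ctrans_mult hW hLh matrix_mul_assoc)
    ultimately show ?thesis unfolding Z_def by (rule hadamard_herm)
  qed
  define lam where "lam = lambda1 Z"
  define M where "M = mat (complex_of_real lam) - Z"
  have gtv: "gt q = - 2 * real CARD('n) * lam + 2 * Re (cdot q (M *v qt)) + Re (cdot qt (Z *v qt))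
     + 2 * Re (cdot q a4) + C1 + C2" for q
    by (simp add: gt_def lam_def M_def)
  have part1: "\<forall>q. unimod q \<longrightarrow> g q \<ge> gt q"
  proof (intro allI impI)
    fix q :: "complex^'n" assume uq: "unimod q"
    have maj: "- 2 * real CARD('n) * lam + 2 * Re (cdot q (M *v qt)) + Re (cdot qt (Z *v qt))
        \<le> - Re (cdot q (Z *v q))"
      using majorize[OF hZ uq qt_unimod] by (simp add: lam_def M_def)
    show "g q \<ge> gt q" using maj MIq[of q] ReE[of q] const C1v C2v gtv[of q] by linarith
  qed
  have eq: "g qt = gt qt"
  proof -
    have "g qt = ln rW" using rW by (simp add: gP PtP[symmetric] W_def[symmetric])
    moreover have "Re (trace (W ** E qt)) = real CARD('d)"
      by (simp add: EqtQB WQB trace_I)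
    moreover have "Re (cdot qt (M *v qt)) = lam * real CARD('n) - Re (cdot qt (Z *v qt))"
      using majorize_eq[OF qt_unimod, of Z] by (simp add: lam_def M_def)
    moreover have "2 * real CARD('n) * lam = 2 * (lam * real CARD('n))" by simp
    ultimately show ?thesis using ReE[of qt] const C1v C2v gtv[of qt] by linarith
  qed
  have part2: "\<forall>qs. unimod qs \<and> (\<forall>k. v $ k \<noteq> 0 \<longrightarrow> qs $ k = exp (\<i> * complex_of_real (Arg (v $ k))))
                \<longrightarrow> (\<forall>q. unimod q \<longrightarrow> gt q \<le> gt qs)"
  proof (intro allI impI)
    fix qs q :: "complex^'n"
    assume a: "unimod qs \<and> (\<forall>k. v $ k \<noteq> 0 \<longrightarrow> qs $ k = exp (\<i> * complex_of_real (Arg (v $ k))))"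
      and uq: "unimod q"
    have vv: "Re (cdot x v) = Re (cdot x (M *v qt)) + Re (cdot x a4)" for x
      by (simp add: v_def lam_def M_def cdot_add_right)
    have "Re (cdot q v) \<le> Re (cdot qs v)"
      using phase_le[OF uq, of v] phase_eq[of v qs] a by simp
    then show "gt q \<le> gt qs" using vv[of q] vv[of qs] gtv[of q] gtv[of qs] by linarith
  qed
  show ?thesis using part1 eq part2 by blast
qed

end
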